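(* Let $\underline{\xi}=(\xi_i)_{i\ge 0}$ be a sequence of real numbers with $\xi_0=1$. Let $(r_n)_{n\ge 0}$ be a non-decreasing sequence of positive integers, and let $(Q_n)_{n\ge 0}$, $(A_n)_{n\ge 0}$, $(B_n)_{n\ge 0}$ be sequences of positive real numbers such that $\lim_{n\to\infty} A_n^{1/r_n}=\infty$ and $Q_nB_n\le Q_{n+1}B_{n+1}$ for all sufficiently large integers $n$. For each integer $n\ge 0$ let $$L_n(\underline{X})=\ell_{0n}X_0+\ell_{1n}X_1+\cdots+\ell_{r_n n}X_{r_n}$$ be a linear form with integer coefficients $\ell_{in}\in\mathbb{Z}$ in $r_n+1$ variables, and write $L_n(\underline{\xi})=\sum_{i=0}^{r_n}\ell_{in}\xi_i$. Assume that for all sufficiently large integers $n$, $$\sum_{i=0}^{r_n}|\ell_{in}|\le Q_n,\qquad 0<|L_n(\underline{\xi})|\le \frac{1}{A_n},\qquad \frac{|L_{n-1}(\underline{\xi})|}{|L_n(\underline{\xi})|}\le B_n.$$ Then $A_n\le 2^{r_n+1}(B_nQ_n)^{r_n}$ for all sufficiently large integers $n$. *)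

theory Defs
  imports Complex_Main
begin

definition linform :: "(nat \<Rightarrow> nat \<Rightarrow> int) \<Rightarrow> (nat \<Rightarrow> nat) \<Rightarrow> (nat \<Rightarrow> real) \<Rightarrow> nat \<Rightarrow> real" where
  "linform l r xi n = (\<Sum>i=0..r n. real_of_int (l i n) * xi i)"

end

theory Submission
  imports Defs "HOL-Library.FuncSet"
begin

lemma dirichlet_real:
  fixes \<xi> :: "nat \<Rightarrow> real" and R :: nat and X \<delta> :: real
  assumes X0: "0 \<le> X" and d0: "0 < \<delta>" and d1: "\<delta> \<le> 1" and Xd: "X * \<delta>^R > 1"
  shows "\<exists>q::int. \<exists>p::nat\<Rightarrow>int. 1 \<le> q \<and> real_of_int q \<le> X \<and>
           (\<forall>i\<in>{1..R}. \<bar>of_int q * \<xi> i - of_int (p i)\<bar> < \<delta>)"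
proof -
  define K where "K = nat \<lfloor>X\<rfloor>"
  have KX: "real K \<le> X" "X < real K + 1" using X0 unfolding K_def by linarith+
  have K1: "real (K+1) * \<delta>^R > 1"
  proof -
    have "X * \<delta>^R \<le> real (K+1) * \<delta>^R"
      using KX d0 by (intro mult_right_mono) auto
    then show ?thesis using Xd by linarith
  qed
  have lim: "(\<lambda>M. real (K+1) * (\<delta> - 1 / real M)^R) \<longlonglongrightarrow> real (K+1) * (\<delta> - 0)^R"
    by (intro tendsto_intros)
  have ev1: "eventually (\<lambda>M. real (K+1) * (\<delta> - 1 / real M)^R > 1) sequentially"
    using order_tendstoD(1)[OF lim] K1 by simp
  have ev2: "eventually (\<lambda>M. 1 / real M < \<delta>) sequentially"
    using order_tendstoD(2)[OF lim_1_over_n d0] .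
  obtain M where M1: "real (K+1) * (\<delta> - 1 / real M)^R > 1" and M2: "1 / real M < \<delta>" and M3: "M > 0"
    using eventually_conj[OF eventually_conj[OF ev1 ev2] eventually_gt_at_top[of 0]]
    by (metis (mono_tags, lifting) eventually_sequentially order.refl)
  define D where "D = nat \<lfloor>\<delta> * real M\<rfloor>"
  have DM: "real D \<le> \<delta> * real M" using d0 M3 unfolding D_def by (simp add: mult_nonneg_nonneg)
  have DM2: "real D \<ge> \<delta> * real M - 1" unfolding D_def by linarith
  have DleM: "D \<le> M" using DM d1 M3
    by (metis mult_left_le_one_le of_nat_0_le_iff of_nat_le_iff d0 order.trans less_imp_le)
  define S where "S = {..K} \<times> (PiE {1..R} (\<lambda>_. {..<D}))"
  define T where "T = PiE {1..R} (\<lambda>_. {..<M})"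
  have cS: "card S = (K+1) * D^R" unfolding S_def by (simp add: card_cartesian_product card_PiE)
  have cT: "card T = M^R" unfolding T_def by (simp add: card_PiE)
  have "real (M^R) < real ((K+1) * D^R)"
  proof -
    have pos: "0 \<le> \<delta> - 1 / real M" using M2 by simp
    have "real M ^ R = real M ^ R * 1" by simp
    also have "\<dots> < real M ^ R * (real (K+1) * (\<delta> - 1 / real M)^R)"
      using M1 M3 by (intro mult_strict_left_mono) auto
    also have "\<dots> = real (K+1) * (real M * (\<delta> - 1 / real M))^R"
      by (simp add: power_mult_distrib)
    also have "\<dots> \<le> real (K+1) * real D ^ R"
    proof -
      have "real M * (\<delta> - 1 / real M) = \<delta> * real M - 1" using M3 by (simp add: field_simps)
      then have "real M * (\<delta> - 1 / real M) \<le> real D" using DM2 by simp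
      moreover have "0 \<le> real M * (\<delta> - 1 / real M)" using pos by simp
      ultimately show ?thesis by (intro mult_left_mono power_mono) auto
    qed
    finally show ?thesis by (simp add: algebra_simps)
  qed
  then have cST: "card T < card S" using cS cT by linarith
  define f where "f = (\<lambda>(q::nat, t::nat\<Rightarrow>nat). (\<lambda>i. if i \<in> {1..R} then
        nat ((\<lceil>real M * (real q * \<xi> i)\<rceil> + int (t i)) mod int M) else undefined))"
  have fST: "f ` S \<subseteq> T"
  proof
    fix y assume "y \<in> f ` S"
    then obtain q t where "y = f (q,t)" by auto
    then show "y \<in> T" unfolding T_def f_def using M3
      by (auto simp: PiE_iff extensional_def nat_less_iff)
  qed
  have "\<not> inj_on f S"
  proof
    assume "inj_on f S"
    then have "card S \<le> card T" using card_inj_on_le[OF _ fST] unfolding T_def by (simp add: finite_PiE)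
    then show False using cST by simp
  qed
  then obtain q t q' t' where qt: "(q,t) \<in> S" "(q',t') \<in> S" "(q,t) \<noteq> (q',t')" and feq: "f (q,t) = f (q',t')"
    unfolding inj_on_def by auto
  define c where "c = (\<lambda>q i. \<lceil>real M * (real q * \<xi> i)\<rceil>)"
  have congr: "(c q i + int (t i)) mod int M = (c q' i + int (t' i)) mod int M" if "i \<in> {1..R}" for i
  proof -
    have "f (q,t) i = f (q',t') i" using feq by simp
    then show ?thesis using that M3 unfolding f_def c_def by (simp add: eq_nat_nat_iff)
  qed
  have tD: "t i < D" "t' i < D" if "i \<in> {1..R}" for i using qt that unfolding S_def by auto
  have qq: "q \<noteq> q'"
  proof
    assume "q = q'"
    have "t i = t' i" if "i \<in> {1..R}" for i
    proof -
      have "int M dvd (c q i + int (t i)) - (c q i + int (t' i))"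
        using congr[OF that] \<open>q = q'\<close> by (simp add: mod_eq_dvd_iff)
      then obtain k where k: "int (t i) - int (t' i) = int M * k" by (auto elim: dvdE)
      have lt: "int (t i) < int M" "int (t' i) < int M" using tD[OF that] DleM by auto
      have "k = 0"
      proof (rule ccontr)
        assume "k \<noteq> 0"
        then have "k \<ge> 1 \<or> k \<le> -1" by linarith
        then show False
        proof
          assume "k \<ge> 1" then have "int M * k \<ge> int M" using M3 by simp
          then show False using k lt by linarith
        next
          assume "k \<le> -1" then have "int M * k \<le> - int M" using M3
            by (metis mult.right_neutral mult_left_mono mult_minus_right of_nat_0_le_iff)
          then show False using k lt by linarith
        qed
      qed
      then show ?thesis using k by simp
    qed
    then have "t = t'" using qt unfolding S_def by (auto intro: PiE_ext)
    then show False using qt \<open>q = q'\<close> by simp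
  qed
  define d where "d = int q - int q'"
  have key: "\<exists>m::int. \<bar>of_int d * \<xi> i - of_int m\<bar> < \<delta>" if i: "i \<in> {1..R}" for i
  proof -
    have "int M dvd (c q i + int (t i)) - (c q' i + int (t' i))"
      using congr[OF i] by (simp add: mod_eq_dvd_iff)
    then obtain m where m: "(c q i + int (t i)) - (c q' i + int (t' i)) = int M * m" by (auto elim: dvdE)
    have c1: "real_of_int (c q i) - 1 < real M * (real q * \<xi> i)" "real M * (real q * \<xi> i) \<le> real_of_int (c q i)"
      unfolding c_def by linarith+
    have c2: "real_of_int (c q' i) - 1 < real M * (real q' * \<xi> i)" "real M * (real q' * \<xi> i) \<le> real_of_int (c q' i)"
      unfolding c_def by linarith+
    have m': "real_of_int (c q i) + real (t i) - real_of_int (c q' i) - real (t' i) = real M * real_of_int m"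
      using arg_cong[OF m, of real_of_int] by simp
    have "\<bar>real M * (of_int d * \<xi> i - of_int m)\<bar> < real D"
    proof -
      have e: "real M * (of_int d * \<xi> i - of_int m) = real M * (real q * \<xi> i) - real M * (real q' * \<xi> i) - real M * real_of_int m"
        unfolding d_def by (simp add: algebra_simps)
      have "real (t i) < real D" "real (t' i) < real D" using tD[OF i] by auto
      then show ?thesis unfolding e using c1 c2 m' by (simp add: abs_less_iff)
    qed
    then have "real M * \<bar>of_int d * \<xi> i - of_int m\<bar> < \<delta> * real M" using DM by (simp add: abs_mult)
    then have "\<bar>of_int d * \<xi> i - of_int m\<bar> < \<delta>" using M3 by (simp add: mult.commute)
    then show ?thesis by blast
  qed
  then obtain m where m: "\<And>i. i \<in> {1..R} \<Longrightarrow> \<bar>of_int d * \<xi> i - of_int (m i)\<bar> < \<delta>" by metis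
  have qK: "q \<le> K" "q' \<le> K" using qt unfolding S_def by auto
  show ?thesis
  proof (cases "d > 0")
    case True
    show ?thesis
      apply (rule exI[of _ d], rule exI[of _ m])
      using True m qK KX unfolding d_def by auto
  next
    case False
    then have "d < 0" using qq unfolding d_def by simp
    show ?thesis
    proof (rule exI[of _ "-d"], rule exI[of _ "\<lambda>i. - m i"], intro conjI ballI)
      fix i assume "i \<in> {1..R}"
      then show "\<bar>of_int (- d) * \<xi> i - of_int (- m i)\<bar> < \<delta>" using m[of i] by (simp add: abs_minus_commute[of "of_int d * \<xi> i"] algebra_simps)
    qed (use \<open>d < 0\<close> qK KX in \<open>auto simp: d_def\<close>)
  qed
qed


theorem mainTheorem1:
  fixes xi :: "nat \<Rightarrow> real"
    and r :: "nat \<Rightarrow> nat"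
    and Q A B :: "nat \<Rightarrow> real"
    and l :: "nat \<Rightarrow> nat \<Rightarrow> int"
  assumes xi0: "xi 0 = 1"
    and r_mono: "mono r"
    and r_pos: "\<And>n. r n > 0"
    and Q_pos: "\<And>n. Q n > 0"
    and A_pos: "\<And>n. A n > 0"
    and B_pos: "\<And>n. B n > 0"
    and A_lim: "filterlim (\<lambda>n. A n powr (1 / real (r n))) at_top sequentially"
    and QB_mono: "eventually (\<lambda>n. Q n * B n \<le> Q (Suc n) * B (Suc n)) sequentially"
    and height: "eventually (\<lambda>n. (\<Sum>i=0..r n. \<bar>real_of_int (l i n)\<bar>) \<le> Q n) sequentially"
    and small: "eventually (\<lambda>n. 0 < \<bar>linform l r xi n\<bar> \<and> \<bar>linform l r xi n\<bar> \<le> 1 / A n) sequentially"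
    and ratio: "eventually (\<lambda>n. \<bar>linform l r xi (n - 1)\<bar> / \<bar>linform l r xi n\<bar> \<le> B n) sequentially"
  shows "eventually (\<lambda>n. A n \<le> 2 ^ (r n + 1) * (B n * Q n) ^ (r n)) sequentially"
proof -
  define L where "L = linform l r xi"
  obtain N0 where N0: "\<And>k. k \<ge> N0 \<Longrightarrow> Q k * B k \<le> Q (Suc k) * B (Suc k)
      \<and> (\<Sum>i=0..r k. \<bar>real_of_int (l i k)\<bar>) \<le> Q k
      \<and> (0 < \<bar>L k\<bar> \<and> \<bar>L k\<bar> \<le> 1 / A k)
      \<and> \<bar>L (k - 1)\<bar> / \<bar>L k\<bar> \<le> B k"
    using eventually_conj[OF QB_mono eventually_conj[OF height eventually_conj[OF small ratio]]]
    unfolding eventually_sequentially L_def by blast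
  define c where "c = min (1 / (2 * Q N0)) (\<bar>L N0\<bar> / Q N0)"
  have c0: "c > 0" unfolding c_def using Q_pos[of N0] N0[of N0] by auto
  define Z where "Z = 3 + 3 / c"
  have evZ: "eventually (\<lambda>n. Z \<le> A n powr (1 / real (r n))) sequentially"
    using A_lim unfolding filterlim_at_top by blast
  show ?thesis
    using evZ eventually_ge_at_top[of N0]
  proof eventually_elim
    case (elim n)
    define R where "R = r n"
    define a where "a = A n powr (1 / real R)"
    define P where "P = Q n * B n"
    have R1: "R \<ge> 1" using r_pos[of n] unfolding R_def by simp
    have P0: "P > 0" unfolding P_def using Q_pos B_pos by simp
    have aZ: "Z \<le> a" using elim unfolding a_def R_def by simp
    have "3 / c > 0" using c0 by simp
    then have a3: "a \<ge> 3" using aZ unfolding Z_def by linarith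
    have ac: "3 / a < c"
    proof -
      have Zp: "Z > 0" unfolding Z_def using c0 by (simp add: add_pos_pos)
      have "0 < a * Z" using Zp a3 by simp
      then have "3 / a \<le> 3 / Z" using aZ by (intro divide_left_mono) auto
      also have "3 / Z = c / (c + 1)" unfolding Z_def using c0 by (simp add: field_simps)
      also have "\<dots> < c" using c0 by (simp add: field_simps)
      finally show ?thesis .
    qed
    have aR: "a ^ R = A n"
    proof -
      have "a ^ R = a powr real R" using a3 by (simp add: powr_realpow)
      also have "\<dots> = A n" unfolding a_def using A_pos[of n] R1 by (simp add: powr_powr)
      finally show ?thesis .
    qed
    show ?case
    proof (rule ccontr)
      assume "\<not> A n \<le> 2 ^ (r n + 1) * (B n * Q n) ^ (r n)"
      then have fail: "A n > 2 ^ (R + 1) * P ^ R" unfolding R_def P_def by (simp add: mult.commute)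
      define \<delta> where "\<delta> = min (1 / (2 * P)) (3 / a)"
      have d0: "\<delta> > 0" unfolding \<delta>_def using P0 a3 by simp
      have "3 / a \<le> 1" using a3 by simp
      then have d1: "\<delta> \<le> 1" unfolding \<delta>_def by (simp add: min_le_iff_disj)
      have dc: "\<delta> < c" unfolding \<delta>_def using ac by simp
      have dP: "\<delta> * P \<le> 1 / 2" unfolding \<delta>_def using P0
        by (simp add: min_def field_simps)
      have dR: "\<delta> ^ R > 2 / A n"
      proof (cases "1 / (2 * P) \<le> 3 / a")
        case True
        then have "\<delta> ^ R = 1 / (2 ^ R * P ^ R)" unfolding \<delta>_def by (simp add: power_divide power_mult_distrib)
        moreover have "2 / A n < 1 / (2 ^ R * P ^ R)"
          using fail A_pos[of n] P0 by (simp add: field_simps)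
        ultimately show ?thesis by simp
      next
        case False
        then have "\<delta> ^ R = 3 ^ R / A n" unfolding \<delta>_def using aR by (simp add: power_divide)
        moreover have "(3::real) ^ R \<ge> 3" using power_increasing[OF R1, of "3::real"] by simp
        ultimately show ?thesis using A_pos[of n] by (simp add: divide_strict_right_mono)
      qed
      define X where "X = A n / 2"
      have Xd: "X * \<delta> ^ R > 1" unfolding X_def using dR A_pos[of n] by (simp add: field_simps)
      obtain q :: int and p :: "nat \<Rightarrow> int" where q1: "1 \<le> q" and qX: "real_of_int q \<le> X"
        and qp: "\<And>i. i \<in> {1..R} \<Longrightarrow> \<bar>of_int q * xi i - of_int (p i)\<bar> < \<delta>"
      proof -
        have "0 \<le> X" unfolding X_def using A_pos[of n] by simp
        from dirichlet_real[OF this d0 d1 Xd, of xi] show ?thesis using that by blast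
      qed
      define xv where "xv = (\<lambda>i. if i = 0 then q else p i)"
      have ev: "\<bar>of_int q * xi i - of_int (xv i)\<bar> \<le> \<delta>" if "i \<le> R" for i
        using qp[of i] that d0 xi0 unfolding xv_def by (cases "i = 0") auto
      define Lx where "Lx = (\<lambda>k. \<Sum>i=0..r k. l i k * xv i)"
      have F1: "\<bar>of_int q * L k - of_int (Lx k)\<bar> \<le> \<delta> * Q k" if "N0 \<le> k" "k \<le> n" for k
      proof -
        have rk: "r k \<le> R" using r_mono that unfolding R_def mono_def by blast
        have "of_int q * L k - of_int (Lx k) = (\<Sum>i=0..r k. of_int (l i k) * (of_int q * xi i - of_int (xv i)))"
        proof -
          have "(\<Sum>i=0..r k. of_int (l i k) * (of_int q * xi i - of_int (xv i)))
             = of_int q * (\<Sum>i=0..r k. of_int (l i k) * xi i) - (\<Sum>i=0..r k. of_int (l i k) * of_int (xv i))"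
            by (simp add: right_diff_distrib sum_subtractf sum_distrib_left mult.left_commute)
          moreover have "real_of_int (Lx k) = (\<Sum>i=0..r k. of_int (l i k) * of_int (xv i))"
            unfolding Lx_def by simp
          ultimately show ?thesis unfolding L_def linform_def by simp
        qed
        also have "\<bar>\<dots>\<bar> \<le> (\<Sum>i=0..r k. \<bar>of_int (l i k)\<bar> * \<delta>)"
        proof -
          have "\<bar>\<Sum>i=0..r k. of_int (l i k) * (of_int q * xi i - of_int (xv i))\<bar>
              \<le> (\<Sum>i=0..r k. \<bar>of_int (l i k) * (of_int q * xi i - of_int (xv i))\<bar>)" by (rule sum_abs)
          also have "\<dots> \<le> (\<Sum>i=0..r k. \<bar>of_int (l i k)\<bar> * \<delta>)"
            using ev rk by (intro sum_mono) (auto simp: abs_mult intro: mult_left_mono)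
          finally show ?thesis .
        qed
        also have "\<dots> = \<delta> * (\<Sum>i=0..r k. \<bar>real_of_int (l i k)\<bar>)" by (simp add: sum_distrib_left mult.commute)
        also have "\<dots> \<le> \<delta> * Q k" using N0[OF that(1)] d0 by (intro mult_left_mono) auto
        finally show ?thesis .
      qed
      have F2: "Q k * B k \<le> P" if "N0 \<le> k" "k \<le> n" for k
        using that(2,1) unfolding P_def
      proof (induction n rule: dec_induct)
        case base then show ?case by simp
      next
        case (step m) then show ?case using N0[of m] by auto
      qed
      define y where "y = (\<lambda>k. \<bar>of_int q * L k\<bar>)"
      have chain: "\<forall>j. j \<le> n - N0 \<longrightarrow> y (n - j) \<le> 1 / 2"
      proof (intro allI)
        fix j show "j \<le> n - N0 \<longrightarrow> y (n - j) \<le> 1 / 2"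
        proof (induction j)
          case 0
          have "y n = real_of_int q * \<bar>L n\<bar>" unfolding y_def using q1 by (simp add: abs_mult)
          also have "\<dots> \<le> X * (1 / A n)"
            using N0[of n] elim q1 qX by (intro mult_mono) auto
          also have "\<dots> = 1 / 2" unfolding X_def using A_pos[of n] by simp
          finally show ?case by simp
        next
          case (Suc j)
          show ?case
          proof
            assume j: "Suc j \<le> n - N0"
            define k where "k = n - j"
            have kk: "n - Suc j = k - 1" unfolding k_def by simp
            have k1: "N0 < k" "k \<le> n" using j unfolding k_def by auto
            have yk: "y k \<le> 1 / 2" using Suc j unfolding k_def by simp
            have Nk: "Q k * B k \<le> Q (Suc k) * B (Suc k) \<and> (\<Sum>i=0..r k. \<bar>real_of_int (l i k)\<bar>) \<le> Q k
              \<and> (0 < \<bar>L k\<bar> \<and> \<bar>L k\<bar> \<le> 1 / A k) \<and> \<bar>L (k - 1)\<bar> / \<bar>L k\<bar> \<le> B k"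
              using N0[of k] k1 by simp
            have ratk: "\<bar>L (k - 1)\<bar> \<le> B k * \<bar>L k\<bar>" using Nk by (simp add: divide_le_eq)
            have yk1: "y (k - 1) \<le> B k * y k"
            proof -
              have "y (k - 1) = of_int q * \<bar>L (k - 1)\<bar>" unfolding y_def using q1 by (simp add: abs_mult)
              also have "\<dots> \<le> of_int q * (B k * \<bar>L k\<bar>)" using ratk q1 by (intro mult_left_mono) auto
              also have "\<dots> = B k * y k" unfolding y_def using q1 by (simp add: abs_mult)
              finally show ?thesis .
            qed
            have F1k: "\<bar>of_int q * L k - of_int (Lx k)\<bar> \<le> \<delta> * Q k" using F1 k1 by simp
            have F2k: "Q k * B k \<le> P" using F2 k1 by simp
            have "y (k - 1) \<le> 1 / 2"
            proof (cases "Lx k = 0")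
              case True
              then have "y k \<le> \<delta> * Q k" using F1k unfolding y_def by simp
              then have "y (k - 1) \<le> B k * (\<delta> * Q k)" using yk1 B_pos[of k]
                by (meson mult_left_mono order_trans less_imp_le)
              also have "\<dots> = \<delta> * (Q k * B k)" by simp
              also have "\<dots> \<le> \<delta> * P" using F2k d0 by (intro mult_left_mono) auto
              finally show ?thesis using dP by simp
            next
              case False
              then have "1 \<le> \<bar>of_int (Lx k)::real\<bar>" by linarith
              also have "\<dots> \<le> y k + \<delta> * Q k" using F1k unfolding y_def by linarith
              finally have "\<delta> * Q k \<ge> 1 / 2" using yk by simp
              then have "Q k \<ge> P"
              proof -
                have "\<delta> \<le> 1 / (2 * P)" unfolding \<delta>_def by simp
                then have "\<delta> * (2 * P) \<le> 1" using P0 by (simp add: field_simps)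
                then show ?thesis using \<open>\<delta> * Q k \<ge> 1 / 2\<close> d0 P0
                proof -
                  have "\<delta> * (2 * P) \<le> \<delta> * (2 * Q k)" using \<open>\<delta> * (2 * P) \<le> 1\<close> \<open>\<delta> * Q k \<ge> 1 / 2\<close> by linarith
                  then show ?thesis using d0 by (simp add: mult_le_cancel_left_pos)
                qed
              qed
              then have "Q k * B k \<le> Q k * 1" using F2k by simp
              then have "B k \<le> 1" using Q_pos[of k] by (simp add: mult_le_cancel_left_pos)
              then have "B k * y k \<le> 1 * y k" unfolding y_def by (intro mult_right_mono) auto
              then have "B k * y k \<le> y k" by simp
              then show ?thesis using yk1 yk by simp
            qed
            then show "y (n - Suc j) \<le> 1 / 2" using kk by simp
          qed
        qed
      qed
      then have yN0: "y N0 \<le> 1 / 2" using elim by (metis diff_diff_cancel order.refl)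
      have F1N: "\<bar>of_int q * L N0 - of_int (Lx N0)\<bar> \<le> \<delta> * Q N0" using F1 elim by simp
      show False
      proof (cases "Lx N0 = 0")
        case True
        then have "\<bar>L N0\<bar> \<le> \<delta> * Q N0"
        proof -
          have "\<bar>L N0\<bar> \<le> of_int q * \<bar>L N0\<bar>" using q1 by (simp add: mult_le_cancel_right1)
          also have "\<dots> = \<bar>of_int q * L N0\<bar>" using q1 by (simp add: abs_mult)
          finally show ?thesis using F1N True by simp
        qed
        then have "\<delta> \<ge> \<bar>L N0\<bar> / Q N0" using Q_pos[of N0] by (simp add: divide_le_eq mult.commute)
        moreover have "c \<le> \<bar>L N0\<bar> / Q N0" unfolding c_def by simp
        ultimately show False using dc by simp
      next
        case False
        then have "1 \<le> \<bar>of_int (Lx N0)::real\<bar>" by linarith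
        also have "\<dots> \<le> y N0 + \<delta> * Q N0" using F1N unfolding y_def by linarith
        finally have "\<delta> * Q N0 \<ge> 1 / 2" using yN0 by simp
        then have "\<delta> \<ge> 1 / (2 * Q N0)" using Q_pos[of N0] by (simp add: field_simps)
        moreover have "c \<le> 1 / (2 * Q N0)" unfolding c_def by simp
        ultimately show False using dc by simp
      qed
    qed
  qed
qed

end
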